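(* Let $\pi\in\mathfrak{S}_n$ avoid $132$ and have all cycles of length $1$ or $3$. Let the $3$-cycles of $\pi$ have element sets $\{a_i<b_i<c_i\}$, $i=1,\dots,m$. Then every fixed point $g$ of $\pi$ satisfies $g>a_i$ for all $i$, and moreover $g$ lies at a hit of the Dyck word formed by the second and third entries, i.e. $|\{i: b_i<g\}|=|\{i: c_i<g\}|$.
   Context: A permutation avoids $132$ if there are no indices $i<j<k$ with $\pi_i<\pi_k<\pi_j$. (The Dyck word of the second and third entries is obtained by listing $\{b_i\}\cup\{c_i\}$ in increasing order, writing $0$ for each $b_i$ and $1$ for each $c_i$; a hit is a place where the preceding letters contain equally many $0$'s and $1$'s.) *)

theory Defs
  imports "HOL-Combinatorics.Permutations"
begin

definition avoids132 :: "(nat \<Rightarrow> nat) \<Rightarrow> nat \<Rightarrow> bool" where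
  "avoids132 \<pi> n \<longleftrightarrow>
     \<not> (\<exists>i j k. 1 \<le> i \<and> i < j \<and> j < k \<and> k \<le> n \<and> \<pi> i < \<pi> k \<and> \<pi> k < \<pi> j)"

definition cycle_len :: "(nat \<Rightarrow> nat) \<Rightarrow> nat \<Rightarrow> nat" where
  "cycle_len \<pi> x = (LEAST k. 0 < k \<and> (\<pi> ^^ k) x = x)"

definition three_cycles :: "(nat \<Rightarrow> nat) \<Rightarrow> nat \<Rightarrow> nat set set" where
  "three_cycles \<pi> n = {{x, \<pi> x, \<pi> (\<pi> x)} | x. x \<in> {1..n} \<and> cycle_len \<pi> x = 3}"

definition middle :: "nat set \<Rightarrow> nat" where
  "middle C = Min (C - {Min C})"

end

theory Submission
  imports Defs
begin

lemma cyc3: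
  assumes "\<pi> permutes {1..n}" "cycle_len \<pi> x = 3"
  shows "\<pi> x \<noteq> x \<and> \<pi> (\<pi> x) \<noteq> x \<and> \<pi> (\<pi> (\<pi> x)) = x"
proof -
  have "permutation \<pi>" using assms(1) permutation_permutes by blast
  then obtain k where k: "k > 0" "(\<pi> ^^ k) x = x" by (rule permutation_self)
  let ?P = "\<lambda>k. 0 < k \<and> (\<pi> ^^ k) x = x"
  have "?P (LEAST k. ?P k)" using k by (intro LeastI[of ?P k]) auto
  then have 3: "?P 3" using assms(2) unfolding cycle_len_def by simp
  have "\<not> ?P 1" "\<not> ?P 2"
    using not_less_Least[of 1 ?P] not_less_Least[of 2 ?P] assms(2)
    unfolding cycle_len_def by auto
  with 3 show ?thesis by (simp add: numeral_eq_Suc)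
qed

lemma orient:
  fixes x y z :: nat
  assumes "x \<noteq> y" "y \<noteq> z" "x \<noteq> z" "\<pi> x = y" "\<pi> y = z" "\<pi> z = x"
  shows "\<exists>a b c. a < b \<and> b < c \<and> {x,y,z} = {a,b,c} \<and>
     ((\<pi> a = b \<and> \<pi> b = c \<and> \<pi> c = a) \<or> (\<pi> a = c \<and> \<pi> c = b \<and> \<pi> b = a))"
proof -
  have s1: "{x,y,z} = {x,z,y}" "{x,y,z} = {y,x,z}" "{x,y,z} = {y,z,x}" "{x,y,z} = {z,x,y}" "{x,y,z} = {z,y,x}"
    by blast+
  consider "x<y" "y<z" | "x<z" "z<y" | "y<x" "x<z" | "y<z" "z<x" | "z<x" "x<y" | "z<y" "y<x"
    using assms(1-3) by linarith
  then show ?thesis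
  proof cases
    case 1 then show ?thesis using assms by (intro exI[of _ x] exI[of _ y] exI[of _ z]) simp
  next
    case 2 then show ?thesis using assms s1 by (intro exI[of _ x] exI[of _ z] exI[of _ y]) simp
  next
    case 3 then show ?thesis using assms s1 by (intro exI[of _ y] exI[of _ x] exI[of _ z]) simp
  next
    case 4 then show ?thesis using assms s1 by (intro exI[of _ y] exI[of _ z] exI[of _ x]) simp
  next
    case 5 then show ?thesis using assms s1 by (intro exI[of _ z] exI[of _ x] exI[of _ y]) simp
  next
    case 6 then show ?thesis using assms s1 by (intro exI[of _ z] exI[of _ y] exI[of _ x]) simp
  qed
qed

lemma tc:
  assumes "\<pi> permutes {1..n}" "C \<in> three_cycles \<pi> n"
  shows "\<exists>a b c. a < b \<and> b < c \<and> C = {a,b,c} \<and> {a,b,c} \<subseteq> {1..n} \<and>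
     ((\<pi> a = b \<and> \<pi> b = c \<and> \<pi> c = a) \<or> (\<pi> a = c \<and> \<pi> c = b \<and> \<pi> b = a))"
proof -
  obtain x where x: "C = {x, \<pi> x, \<pi> (\<pi> x)}" "x \<in> {1..n}" "cycle_len \<pi> x = 3"
    using assms(2) unfolding three_cycles_def by auto
  have c: "\<pi> x \<noteq> x" "\<pi> (\<pi> x) \<noteq> x" "\<pi> (\<pi> (\<pi> x)) = x" using cyc3[OF assms(1) x(3)] by auto
  have inj: "inj \<pi>" using assms(1) permutes_inj by blast
  have d: "\<pi> x \<noteq> \<pi> (\<pi> x)" using c(1) inj by (metis injD)
  have p1: "\<pi> x \<in> {1..n}" using x(2) by (rule permutes_in_image[OF assms(1), THEN iffD2])
  have p2: "\<pi> (\<pi> x) \<in> {1..n}" using p1 by (rule permutes_in_image[OF assms(1), THEN iffD2])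
  have sub: "C \<subseteq> {1..n}" using x(1,2) p1 p2 by simp
  obtain a b c where abc: "a < b" "b < c" "{x, \<pi> x, \<pi> (\<pi> x)} = {a,b,c}"
     "(\<pi> a = b \<and> \<pi> b = c \<and> \<pi> c = a) \<or> (\<pi> a = c \<and> \<pi> c = b \<and> \<pi> b = a)"
    using orient[OF c(1)[symmetric] d c(2)[symmetric] refl refl c(3)] by blast
  have "C = {a,b,c}" using abc(3) x(1) by simp
  then show ?thesis using abc sub by (intro exI[of _ a] exI[of _ b] exI[of _ c]) simp
qed

lemma tc_vals:
  assumes "a < b" "b < (c::nat)"
  shows "Min {a,b,c} = a" "middle {a,b,c} = b" "Max {a,b,c} = c"
proof -
  show m: "Min {a,b,c} = a" using assms by (simp add: min_def)
  have "{a,b,c} - {a} = {b,c}" using assms by auto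
  then show "middle {a,b,c} = b" unfolding middle_def m using assms by (simp add: min_def)
  show "Max {a,b,c} = c" using assms by (simp add: max_def)
qed

theorem lemma4p7:
  fixes \<pi> :: "nat \<Rightarrow> nat" and n :: nat
  assumes "\<pi> permutes {1..n}"
    and "avoids132 \<pi> n"
    and "\<forall>x\<in>{1..n}. cycle_len \<pi> x = 1 \<or> cycle_len \<pi> x = 3"
  shows "\<forall>g\<in>{1..n}. \<pi> g = g \<longrightarrow>
           (\<forall>C\<in>three_cycles \<pi> n. Min C < g) \<and>
           card {C\<in>three_cycles \<pi> n. middle C < g} = card {C\<in>three_cycles \<pi> n. Max C < g}"
proof (intro ballI impI)
  fix g assume g: "g \<in> {1..n}" "\<pi> g = g"
  have av: "\<not> (1 \<le> i \<and> i < j \<and> j < k \<and> k \<le> n \<and> \<pi> i < \<pi> k \<and> \<pi> k < \<pi> j)" for i j k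
    using assms(2) unfolding avoids132_def by blast
  have key: "Min C < g \<and> (middle C < g \<longleftrightarrow> Max C < g)" if C: "C \<in> three_cycles \<pi> n" for C
  proof -
    obtain a b c where abc: "a < b" "b < c" "C = {a,b,c}" "{a,b,c} \<subseteq> {1..n}"
      "(\<pi> a = b \<and> \<pi> b = c \<and> \<pi> c = a) \<or> (\<pi> a = c \<and> \<pi> c = b \<and> \<pi> b = a)"
      using tc[OF assms(1) C] by blast
    have ne: "g \<noteq> a" "g \<noteq> b" "g \<noteq> c" using abc(1,2,5) g(2) by auto
    have r: "1 \<le> a" "c \<le> n" using abc(4) by auto
    have g1: "1 \<le> g" using g(1) by simp
    have "a < g"
    proof (rule ccontr)
      assume "\<not> a < g"
      then have ga: "g < a" using ne by simp
      from abc(5) show False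
      proof
        assume h: "\<pi> a = b \<and> \<pi> b = c \<and> \<pi> c = a"
        show False using av[of g b c] h ga g1 abc(1,2) r g(2) by linarith
      next
        assume h: "\<pi> a = c \<and> \<pi> c = b \<and> \<pi> b = a"
        show False using av[of g a b] h ga g1 abc(1,2) r g(2) by linarith
      qed
    qed
    moreover have "\<not> (b < g \<and> g < c)"
    proof
      assume h0: "b < g \<and> g < c"
      from abc(5) show False
      proof
        assume h: "\<pi> a = b \<and> \<pi> b = c \<and> \<pi> c = a"
        show False using av[of a b g] h h0 abc(1,2) r g(2) by linarith
      next
        assume h: "\<pi> a = c \<and> \<pi> c = b \<and> \<pi> b = a"
        show False using av[of b g c] h h0 abc(1,2) r g(2) by linarith
      qed
    qed
    ultimately show ?thesis using tc_vals[OF abc(1,2)] abc(3) ne by auto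
  qed
  show "(\<forall>C\<in>three_cycles \<pi> n. Min C < g) \<and>
           card {C\<in>three_cycles \<pi> n. middle C < g} = card {C\<in>three_cycles \<pi> n. Max C < g}"
  proof
    show "\<forall>C\<in>three_cycles \<pi> n. Min C < g" using key by blast
    have "{C\<in>three_cycles \<pi> n. middle C < g} = {C\<in>three_cycles \<pi> n. Max C < g}"
      using key by blast
    then show "card {C\<in>three_cycles \<pi> n. middle C < g} = card {C\<in>three_cycles \<pi> n. Max C < g}"
      by simp
  qed
qed

end
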